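(* Let $\hat q,\hat p$ be $n\times n$ parametric matrices and $M$ an invertible $n\times n$ $(\hat q,\hat p)$-Manin matrix over $\mathfrak R$. Let $I=(i_1<\dots<i_k)$ be an increasing multi-index and $J=(j_1,\dots,j_k)$ any multi-index, both with entries in $\{1,\dots,n\}$. Then $$\varepsilon(\hat p,I^c\oplus I^{\tau})\,\mathrm{cdet}_{\hat q}(M)\,\mathrm{cdet}_{\hat p'}((M^{-1})_{IJ})=\varepsilon(\hat q,J^c\oplus J^{\tau})\,\mathrm{cdet}_{\hat q}(M_{J^cI^c}),$$ where, when $J$ has a repeated entry, the right-hand side is understood to be $0$.
   Context: $\mathfrak R$ is an associative unital algebra over $\mathbb C$. A parametric $n\times n$ matrix is a matrix $\hat q=(q_{ij})$ of nonzero complex numbers with $q_{ij}q_{ji}=1$, $q_{ii}=1$; $\hat p'=(p'_{ij})$ with $p'_{ij}=p_{ij}^{-1}$. An $n\times n$ matrix $M$ over $\mathfrak R$ is a $(\hat q,\hat p)$-Manin matrix if $M_{ik}M_{jk}=q_{ji}M_{jk}M_{ik}$ for $i<j$ and all $k$, and $M_{ik}M_{jl}-q_{ji}p_{kl}M_{jl}M_{ik}+p_{kl}M_{il}M_{jk}-q_{ji}M_{jk}M_{il}=0$ for $i<j$, $k<l$. For a multi-index $I$ with distinct entries in $\{1,\dots,n\}$, $I^c$ is the increasing multi-index of elements of $\{1,\dots,n\}$ not in $I$; $I^{\tau}=(i_k,\dots,i_1)$ is the reverse; $\oplus$ is juxtaposition. For a multi-index $I$, $\varepsilon(\hat q,I)=0$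 if two entries coincide, otherwise $\varepsilon(\hat q,I)=\prod_{s<t,\ i_s>i_t}(-q_{i_si_t})$. For increasing $I=(i_1<\dots<i_r)$ and $\sigma\in S_r$, $\varepsilon(\hat q,I,\sigma)=\prod_{s<t,\ \sigma(s)>\sigma(t)}(-q_{i_{\sigma(s)}i_{\sigma(t)}})$. For any matrix $X$, increasing $I$ and any multi-index $J=(j_1,\dots,j_r)$, $\mathrm{cdet}_{\hat q}(X_{IJ})=\sum_{\sigma\in S_r}\varepsilon(\hat q,I,\sigma)X_{i_{\sigma(1)},j_1}\cdots X_{i_{\sigma(r)},j_r}$ (likewise with any parametric matrix in place of $\hat q$); $\mathrm{cdet}_{\hat q}(X)$ is the case $I=J=(1,\dots,n)$. *)

theory Defs
  imports Complex_Main "HOL-Combinatorics.Permutations"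
begin

text \<open>A unital associative algebra over the complex numbers is modelled as a ring
  'a :: ring_1 together with its structure map scal : complex -> 'a, a unital ring
  homomorphism into the centre of 'a (scalar multiplication c.x = scal c * x).\<close>
definition complex_algebra_map :: "(complex \<Rightarrow> 'a::ring_1) \<Rightarrow> bool" where
  "complex_algebra_map scal \<longleftrightarrow>
     scal 1 = 1 \<and>
     (\<forall>a b. scal (a + b) = scal a + scal b) \<and>
     (\<forall>a b. scal (a * b) = scal a * scal b) \<and>
     (\<forall>c x. scal c * x = x * scal c)"

text \<open>Matrices are functions nat => nat => _, indices range over {1..n}.\<close>
definition param_matrix :: "nat \<Rightarrow> (nat \<Rightarrow> nat \<Rightarrow> complex) \<Rightarrow> bool" where
  "param_matrix n q \<longleftrightarrow>
     (\<forall>i\<in>{1..n}. \<forall>j\<in>{1..n}. q i j \<noteq> 0 \<and> q i j * q j i = 1) \<and>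
     (\<forall>i\<in>{1..n}. q i i = 1)"

definition pinv :: "(nat \<Rightarrow> nat \<Rightarrow> complex) \<Rightarrow> nat \<Rightarrow> nat \<Rightarrow> complex" where
  "pinv p = (\<lambda>i j. inverse (p i j))"

definition manin ::
  "(complex \<Rightarrow> 'a::ring_1) \<Rightarrow> nat \<Rightarrow> (nat \<Rightarrow> nat \<Rightarrow> complex) \<Rightarrow> (nat \<Rightarrow> nat \<Rightarrow> complex)
     \<Rightarrow> (nat \<Rightarrow> nat \<Rightarrow> 'a) \<Rightarrow> bool" where
  "manin scal n q p M \<longleftrightarrow>
     (\<forall>i\<in>{1..n}. \<forall>j\<in>{1..n}. \<forall>k\<in>{1..n}. i < j \<longrightarrow>
        M i k * M j k = scal (q j i) * M j k * M i k) \<and>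
     (\<forall>i\<in>{1..n}. \<forall>j\<in>{1..n}. \<forall>k\<in>{1..n}. \<forall>l\<in>{1..n}. i < j \<longrightarrow> k < l \<longrightarrow>
        M i k * M j l - scal (q j i * p k l) * M j l * M i k
          + scal (p k l) * M i l * M j k - scal (q j i) * M j k * M i l = 0)"

definition mat_mult :: "nat \<Rightarrow> (nat \<Rightarrow> nat \<Rightarrow> 'a::ring_1) \<Rightarrow> (nat \<Rightarrow> nat \<Rightarrow> 'a) \<Rightarrow> nat \<Rightarrow> nat \<Rightarrow> 'a" where
  "mat_mult n A B = (\<lambda>i j. \<Sum>k = 1..n. A i k * B k j)"

definition mat_one :: "nat \<Rightarrow> nat \<Rightarrow> 'a::ring_1" where
  "mat_one = (\<lambda>i j. if i = j then 1 else 0)"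

definition is_inverse :: "nat \<Rightarrow> (nat \<Rightarrow> nat \<Rightarrow> 'a::ring_1) \<Rightarrow> (nat \<Rightarrow> nat \<Rightarrow> 'a) \<Rightarrow> bool" where
  "is_inverse n M N \<longleftrightarrow>
     (\<forall>i\<in>{1..n}. \<forall>j\<in>{1..n}. mat_mult n M N i j = mat_one i j \<and> mat_mult n N M i j = mat_one i j)"

text \<open>Multi-indices are lists; position s of the paper is list index s-1.\<close>
definition eps :: "(nat \<Rightarrow> nat \<Rightarrow> complex) \<Rightarrow> nat list \<Rightarrow> complex" where
  "eps q I = (if \<not> distinct I then 0 else
     (\<Prod>(s,t) \<in> {(s,t). s < t \<and> t < length I \<and> I ! s > I ! t}. - q (I ! s) (I ! t)))"

definition eps_perm :: "(nat \<Rightarrow> nat \<Rightarrow> complex) \<Rightarrow> nat list \<Rightarrow> (nat \<Rightarrow> nat) \<Rightarrow> complex" where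
  "eps_perm q I \<sigma> =
     (\<Prod>(s,t) \<in> {(s,t). s < t \<and> t < length I \<and> \<sigma> s > \<sigma> t}. - q (I ! \<sigma> s) (I ! \<sigma> t))"

text \<open>cdet_q(X_{IJ}) for increasing I and arbitrary J with length J = length I.\<close>
definition cdet :: "(complex \<Rightarrow> 'a::ring_1) \<Rightarrow> (nat \<Rightarrow> nat \<Rightarrow> complex) \<Rightarrow> nat list \<Rightarrow> nat list
     \<Rightarrow> (nat \<Rightarrow> nat \<Rightarrow> 'a) \<Rightarrow> 'a" where
  "cdet scal q I J X =
     (\<Sum>\<sigma> \<in> {\<sigma>. \<sigma> permutes {..<length I}}.
        scal (eps_perm q I \<sigma>) * prod_list (map (\<lambda>s. X (I ! \<sigma> s) (J ! s)) [0..<length I]))"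

definition compl_idx :: "nat \<Rightarrow> nat list \<Rightarrow> nat list" where
  "compl_idx n I = filter (\<lambda>i. i \<notin> set I) [1..<n+1]"

end

theory Submission
  imports Defs
begin


definition pairs :: "nat list \<Rightarrow> (nat \<times> nat) set" where
  "pairs L = {(s,t). s < t \<and> t < length L \<and> L ! s > L ! t}"

lemma finite_pairs: "finite (pairs L)"
  by (rule finite_subset[of _ "{..<length L} \<times> {..<length L}"]) (auto simp: pairs_def)

lemma eps_pairs: "distinct L \<Longrightarrow> eps q L = (\<Prod>(s,t)\<in>pairs L. - q (L!s) (L!t))"
  by (simp add: eps_def pairs_def)

lemma pairs_Cons: "pairs (x#L) = ((\<lambda>t. (0, Suc t)) ` {t. t < length L \<and> L!t < x})
    \<union> ((\<lambda>(s,t). (Suc s, Suc t)) ` pairs L)"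
proof (rule set_eqI)
  fix st :: "nat \<times> nat"
  obtain s t where st: "st = (s,t)" by (cases st)
  show "st \<in> pairs (x#L) \<longleftrightarrow> st \<in> ((\<lambda>t. (0, Suc t)) ` {t. t < length L \<and> L!t < x})
    \<union> ((\<lambda>(s,t). (Suc s, Suc t)) ` pairs L)"
    unfolding st pairs_def
    by (cases s; cases t) (auto simp: image_iff)
qed

lemma eps_Cons:
  assumes "distinct (x#L)"
  shows "eps q (x#L) = (\<Prod>y\<in>{y\<in>set L. y<x}. - q x y) * eps q L"
proof -
  have dL: "distinct L" using assms by simp
  let ?A = "(\<lambda>t. (0, Suc t)) ` {t. t < length L \<and> L!t < x}"
  let ?B = "(\<lambda>(s,t). (Suc s, Suc t)) ` pairs L"
  have fA: "finite ?A" by auto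
  have fB: "finite ?B" using finite_pairs by auto
  have dis: "?A \<inter> ?B = {}" by auto
  have "eps q (x#L) = (\<Prod>(s,t)\<in>?A \<union> ?B. - q ((x#L)!s) ((x#L)!t))"
    using assms by (simp add: eps_pairs pairs_Cons)
  also have "\<dots> = (\<Prod>(s,t)\<in>?A. - q ((x#L)!s) ((x#L)!t)) * (\<Prod>(s,t)\<in>?B. - q ((x#L)!s) ((x#L)!t))"
    by (rule prod.union_disjoint[OF fA fB dis])
  also have "(\<Prod>(s,t)\<in>?A. - q ((x#L)!s) ((x#L)!t)) = (\<Prod>t\<in>{t. t < length L \<and> L!t < x}. - q x (L!t))"
    by (subst prod.reindex) (auto simp: inj_on_def)
  also have "\<dots> = (\<Prod>y\<in>{y\<in>set L. y<x}. - q x y)"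
  proof -
    have "{y\<in>set L. y<x} = nth L ` {t. t < length L \<and> L!t < x}"
      by (auto simp: in_set_conv_nth)
    moreover have "inj_on (nth L) {t. t < length L \<and> L!t < x}"
      using inj_on_nth[OF dL] by auto
    ultimately show ?thesis by (simp add: prod.reindex)
  qed
  also have "(\<Prod>(s,t)\<in>?B. - q ((x#L)!s) ((x#L)!t)) = eps q L"
    using dL by (subst prod.reindex) (auto simp: inj_on_def eps_pairs intro!: prod.cong)
  finally show ?thesis .
qed

definition cross :: "(nat \<Rightarrow> nat \<Rightarrow> complex) \<Rightarrow> nat set \<Rightarrow> nat set \<Rightarrow> complex" where
  "cross q A B = (\<Prod>(a,b)\<in>{(a,b). a \<in> A \<and> b \<in> B \<and> b < a}. - q a b)"

lemma cross_insert:
  assumes "finite A" "finite B" "x \<notin> A"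
  shows "cross q (insert x A) B = (\<Prod>y\<in>{y\<in>B. y<x}. - q x y) * cross q A B"
proof -
  have e: "{(a,b). a \<in> insert x A \<and> b \<in> B \<and> b < a} = (\<lambda>y. (x,y)) ` {y\<in>B. y<x} \<union> {(a,b). a \<in> A \<and> b \<in> B \<and> b < a}"
    by auto
  have f2: "finite {(a,b). a \<in> A \<and> b \<in> B \<and> b < a}"
    by (rule finite_subset[of _ "A \<times> B"]) (use assms in auto)
  show ?thesis unfolding cross_def e
    by (subst prod.union_disjoint) (use assms f2 in \<open>auto simp: prod.reindex inj_on_def\<close>)
qed

lemma cross_empty[simp]: "cross q {} B = 1"
  by (simp add: cross_def)

lemma eps_Nil[simp]: "eps q [] = 1"
  by (simp add: eps_def)

lemma eps_append:
  assumes "distinct (A @ B)"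
  shows "eps q (A @ B) = eps q A * eps q B * cross q (set A) (set B)"
  using assms
proof (induction A)
  case Nil then show ?case by simp
next
  case (Cons x A)
  have d: "distinct (x # A @ B)" using Cons.prems by simp
  have "eps q ((x#A) @ B) = (\<Prod>y\<in>{y\<in>set A \<union> set B. y<x}. - q x y) * eps q (A @ B)"
    using eps_Cons[OF d] by simp
  also have "{y\<in>set A \<union> set B. y<x} = {y\<in>set A. y<x} \<union> {y\<in>set B. y<x}" by auto
  also have "(\<Prod>y\<in>\<dots>. - q x y) = (\<Prod>y\<in>{y\<in>set A. y<x}. - q x y) * (\<Prod>y\<in>{y\<in>set B. y<x}. - q x y)"
    by (rule prod.union_disjoint) (use Cons.prems in auto)
  finally show ?case
    using Cons eps_Cons[of x A q] cross_insert[of "set A" "set B" x q]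
    by (simp add: algebra_simps)
qed

lemma eps_sorted: "sorted_wrt (<) L \<Longrightarrow> eps q L = 1"
proof -
  assume s: "sorted_wrt (<) L"
  then have "pairs L = {}" by (auto simp: pairs_def sorted_wrt_iff_nth_less dest: less_asym)
  then show ?thesis using s by (simp add: eps_pairs strict_sorted_iff)
qed

lemma cross_insert2:
  assumes "finite A" "finite B" "x \<notin> B"
  shows "cross q A (insert x B) = (\<Prod>a\<in>{a\<in>A. x<a}. - q a x) * cross q A B"
proof -
  have e: "{(a,b). a \<in> A \<and> b \<in> insert x B \<and> b < a} = (\<lambda>a. (a,x)) ` {a\<in>A. x<a} \<union> {(a,b). a \<in> A \<and> b \<in> B \<and> b < a}"
    by auto
  have f2: "finite {(a,b). a \<in> A \<and> b \<in> B \<and> b < a}"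
    by (rule finite_subset[of _ "A \<times> B"]) (use assms in auto)
  show ?thesis unfolding cross_def e
    by (subst prod.union_disjoint) (use assms f2 in \<open>auto simp: prod.reindex inj_on_def\<close>)
qed

lemma eps_single[simp]: "eps q [x] = 1"
  by (rule eps_sorted) simp

lemma eps_rev:
  assumes "distinct L"
  shows "eps q L * eps q (rev L) = cross q (set L) (set L)"
  using assms
proof (induction L)
  case Nil then show ?case by simp
next
  case (Cons x L)
  have xL: "x \<notin> set L" and dL: "distinct L" using Cons.prems by auto
  have e1: "eps q (x#L) = (\<Prod>y\<in>{y\<in>set L. y<x}. - q x y) * eps q L"
    by (rule eps_Cons[OF Cons.prems])
  have e2: "eps q (rev (x#L)) = eps q (rev L) * cross q (set L) {x}"
    using eps_append[of "rev L" "[x]" q] Cons.prems by simp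
  have c1: "cross q (set (x#L)) (set (x#L)) = (\<Prod>y\<in>{y\<in>insert x (set L). y<x}. - q x y) * cross q (set L) (insert x (set L))"
    using cross_insert[of "set L" "insert x (set L)" x q] xL by simp
  have c2: "cross q (set L) (insert x (set L)) = (\<Prod>a\<in>{a\<in>set L. x<a}. - q a x) * cross q (set L) (set L)"
    using cross_insert2[of "set L" "set L" x q] xL by simp
  have c3: "cross q (set L) {x} = (\<Prod>a\<in>{a\<in>set L. x<a}. - q a x)"
    using cross_insert2[of "set L" "{}" x q] by (simp add: cross_def)
  have c4: "{y\<in>insert x (set L). y<x} = {y\<in>set L. y<x}" by auto
  show ?case using Cons.IH[OF dL] e1 e2 c1 c2 c3 c4
    by (simp add: algebra_simps)
qed

lemma eps_pinv:
  assumes "param_matrix n p" "distinct L" "set L \<subseteq> {1..n}"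
  shows "eps (pinv p) L * eps p L = 1"
proof -
  have "eps (pinv p) L * eps p L = (\<Prod>(s,t)\<in>pairs L. (- pinv p (L!s) (L!t)) * (- p (L!s) (L!t)))"
    using assms(2) by (simp add: eps_pairs prod.distrib[symmetric] case_prod_unfold)
  also have "\<dots> = (\<Prod>(s,t)\<in>pairs L. 1)"
  proof (rule prod.cong[OF refl])
    fix st assume "st \<in> pairs L"
    then have "fst st < length L" "snd st < length L" by (auto simp: pairs_def)
    then have "L ! fst st \<in> {1..n}" "L ! snd st \<in> {1..n}" using assms(3) nth_mem by blast+
    then have "p (L ! fst st) (L ! snd st) \<noteq> 0" using assms(1) by (simp add: param_matrix_def)
    then show "(case st of (s,t) \<Rightarrow> (- pinv p (L!s) (L!t)) * (- p (L!s) (L!t))) = (case st of (s,t) \<Rightarrow> 1)"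
      by (cases st) (simp add: pinv_def)
  qed
  finally show ?thesis by simp
qed

lemma eps_swap:
  assumes "distinct (P @ a # b # S)" "a < b"
  shows "eps q (P @ b # a # S) = (- q b a) * eps q (P @ a # b # S)"
proof -
  have d1: "distinct (a # b # S)" "distinct (b # S)" "distinct (b # a # S)" "distinct (a # S)"
    using assms by auto
  have s: "set (b # a # S) = set (a # b # S)" by auto
  have "eps q (a # b # S) = (\<Prod>y\<in>{y\<in>set (b#S). y<a}. - q a y) * ((\<Prod>y\<in>{y\<in>set S. y<b}. - q b y) * eps q S)"
    using eps_Cons[OF d1(1)] eps_Cons[OF d1(2)] by simp
  moreover have "eps q (b # a # S) = (\<Prod>y\<in>{y\<in>set (a#S). y<b}. - q b y) * ((\<Prod>y\<in>{y\<in>set S. y<a}. - q a y) * eps q S)"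
    using eps_Cons[OF d1(3)] eps_Cons[OF d1(4)] by simp
  moreover have "{y\<in>set (b#S). y<a} = {y\<in>set S. y<a}" using assms by auto
  moreover have "{y\<in>set (a#S). y<b} = insert a {y\<in>set S. y<b}" using assms by auto
  moreover have "(\<Prod>y\<in>insert a {y\<in>set S. y<b}. - q b y) = - q b a * (\<Prod>y\<in>{y\<in>set S. y<b}. - q b y)"
    using d1 by (subst prod.insert) auto
  ultimately have "eps q (b # a # S) = (- q b a) * eps q (a # b # S)" by (simp add: algebra_simps)
  moreover have "distinct (P @ b # a # S)" using assms by auto
  ultimately show ?thesis using eps_append[of P "a#b#S" q] eps_append[of P "b#a#S" q] assms s
    by simp
qed



definition perms :: "nat set \<Rightarrow> nat list set" where
  "perms A = {L. distinct L \<and> set L = A}"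

lemma finite_perms: "finite A \<Longrightarrow> finite (perms A)"
  by (rule finite_subset[of _ "{xs. set xs \<subseteq> A \<and> length xs = card A}"])
     (auto simp: perms_def distinct_card finite_lists_length_eq)

lemma perms_length: "L \<in> perms A \<Longrightarrow> length L = card A"
  by (auto simp: perms_def distinct_card)

lemma map2_nth: "length A = length B \<Longrightarrow> map2 f A B = map (\<lambda>s. f (A!s) (B!s)) [0..<length A]"
  by (rule nth_equalityI) auto

lemma sorted_nth_less_iff:
  fixes K :: "nat list"
  assumes "sorted_wrt (<) K" "i < length K" "j < length K"
  shows "K!i < K!j \<longleftrightarrow> i < j"
proof
  assume "i < j" then show "K!i < K!j" using assms by (simp add: sorted_wrt_iff_nth_less)
next
  assume h: "K!i < K!j"
  show "i < j"
  proof (rule ccontr)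
    assume "\<not> i < j"
    then have "j < i \<or> j = i" by auto
    then show False
    proof
      assume "j < i" then have "K!j < K!i" using assms by (simp add: sorted_wrt_iff_nth_less)
      then show False using h by linarith
    qed (use h in simp)
  qed
qed

lemma eps_perm_list:
  assumes s: "sorted_wrt (<) K" and sp: "\<sigma> permutes {..<length K}"
  shows "eps_perm q K \<sigma> = eps q (map (\<lambda>s. K ! \<sigma> s) [0..<length K])"
proof -
  let ?L = "map (\<lambda>s. K ! \<sigma> s) [0..<length K]"
  have dK: "distinct K" using s strict_sorted_iff by blast
  have lt: "\<And>s. s < length K \<Longrightarrow> \<sigma> s < length K" using permutes_in_image[OF sp] by auto
  have injs: "inj_on \<sigma> {..<length K}" using permutes_inj_on[OF sp] .
  have "inj_on (\<lambda>s. K ! \<sigma> s) {..<length K}"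
  proof (rule inj_onI)
    fix x y assume "x \<in> {..<length K}" "y \<in> {..<length K}" "K ! \<sigma> x = K ! \<sigma> y"
    then have "\<sigma> x = \<sigma> y" using nth_eq_iff_index_eq[OF dK lt lt] by auto
    then show "x = y" using injs \<open>x \<in> {..<length K}\<close> \<open>y \<in> {..<length K}\<close> by (auto dest: inj_onD)
  qed
  then have dL: "distinct ?L" by (simp add: distinct_map atLeast0LessThan)
  have pe: "pairs ?L = {(s,t). s < t \<and> t < length K \<and> \<sigma> s > \<sigma> t}"
  proof (rule set_eqI)
    fix st :: "nat \<times> nat"
    obtain a b where st: "st = (a,b)" by (cases st)
    have "a < b \<Longrightarrow> b < length K \<Longrightarrow> (K ! \<sigma> b < K ! \<sigma> a \<longleftrightarrow> \<sigma> b < \<sigma> a)"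
      by (rule sorted_nth_less_iff[OF s]) (auto intro: lt)
    then show "st \<in> pairs ?L \<longleftrightarrow> st \<in> {(s,t). s < t \<and> t < length K \<and> \<sigma> s > \<sigma> t}"
      unfolding st pairs_def by auto
  qed
  have "eps q ?L = (\<Prod>(s,t)\<in>{(s,t). s < t \<and> t < length K \<and> \<sigma> s > \<sigma> t}. - q (?L!s) (?L!t))"
    using eps_pairs[OF dL] pe by simp
  also have "\<dots> = (\<Prod>(s,t)\<in>{(s,t). s < t \<and> t < length K \<and> \<sigma> s > \<sigma> t}. - q (K ! \<sigma> s) (K ! \<sigma> t))"
  proof (rule prod.cong[OF refl])
    fix x assume "x \<in> {(s,t). s < t \<and> t < length K \<and> \<sigma> s > \<sigma> t}"
    then obtain a b where x: "x = (a,b)" "a < b" "b < length K" by auto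
    then show "(case x of (s,t) \<Rightarrow> - q (?L!s) (?L!t)) = (case x of (s,t) \<Rightarrow> - q (K ! \<sigma> s) (K ! \<sigma> t))"
      by simp
  qed
  finally show ?thesis by (simp add: eps_perm_def)
qed

lemma distinct_perm_list:
  fixes K :: "nat list"
  assumes s: "sorted_wrt (<) K" and sp: "\<sigma> permutes {..<length K}"
  shows "distinct (map (\<lambda>s. K ! \<sigma> s) [0..<length K])"
proof -
  have dK: "distinct K" using s strict_sorted_iff by blast
  have lt: "\<And>s. s < length K \<Longrightarrow> \<sigma> s < length K" using permutes_in_image[OF sp] by auto
  have injs: "inj_on \<sigma> {..<length K}" using permutes_inj_on[OF sp] .
  have "inj_on (\<lambda>s. K ! \<sigma> s) {..<length K}"
  proof (rule inj_onI)
    fix x y assume "x \<in> {..<length K}" "y \<in> {..<length K}" "K ! \<sigma> x = K ! \<sigma> y"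
    then have "\<sigma> x = \<sigma> y" using nth_eq_iff_index_eq[OF dK lt lt] by auto
    then show "x = y" using injs \<open>x \<in> {..<length K}\<close> \<open>y \<in> {..<length K}\<close> by (auto dest: inj_onD)
  qed
  then show ?thesis by (simp add: distinct_map atLeast0LessThan)
qed

lemma bij_perm_list:
  fixes K :: "nat list"
  assumes s: "sorted_wrt (<) K"
  shows "bij_betw (\<lambda>\<sigma>. map (\<lambda>s. K ! \<sigma> s) [0..<length K]) {\<sigma>. \<sigma> permutes {..<length K}} (perms (set K))"
proof -
  let ?r = "length K"
  let ?f = "\<lambda>\<sigma>. map (\<lambda>s. K ! \<sigma> s) [0..<length K]"
  have dK: "distinct K" using s strict_sorted_iff by blast
  have injK: "inj_on (nth K) {..<?r}" using inj_on_nth[OF dK] by auto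
  have imK: "nth K ` {..<?r} = set K" by (auto simp: in_set_conv_nth)
  show ?thesis
  proof (rule bij_betw_imageI)
    show "inj_on ?f {\<sigma>. \<sigma> permutes {..<length K}}"
    proof (rule inj_onI)
      fix \<sigma> \<tau> assume a: "\<sigma> \<in> {\<sigma>. \<sigma> permutes {..<length K}}" "\<tau> \<in> {\<sigma>. \<sigma> permutes {..<length K}}" "?f \<sigma> = ?f \<tau>"
      show "\<sigma> = \<tau>"
      proof
        fix x
        show "\<sigma> x = \<tau> x"
        proof (cases "x < ?r")
          case True
          have "K ! \<sigma> x = K ! \<tau> x" using a(3) True
            by (metis (no_types, lifting) add_0 diff_zero length_map length_upt nth_map nth_upt)
          moreover have "\<sigma> x < ?r" "\<tau> x < ?r"
            using a True permutes_in_image[of _ "{..<?r}"] by auto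
          ultimately show ?thesis using injK by (auto simp: inj_on_def)
        next
          case False
          have "\<sigma> x = x" "\<tau> x = x" using a(1,2) False by (auto intro: permutes_not_in)
          then show ?thesis by simp
        qed
      qed
    qed
  next
    show "?f ` {\<sigma>. \<sigma> permutes {..<length K}} = perms (set K)"
    proof (rule set_eqI, rule iffI)
      fix L assume "L \<in> ?f ` {\<sigma>. \<sigma> permutes {..<length K}}"
      then obtain \<sigma> where sp: "\<sigma> permutes {..<length K}" and L: "L = ?f \<sigma>" by auto
      have "distinct L" using distinct_perm_list[OF s sp] L by simp
      moreover have "set L = set K"
      proof -
        have "set L = (\<lambda>s. K ! \<sigma> s) ` {0..<?r}" using L by simp
        also have "\<dots> = nth K ` (\<sigma> ` {..<?r})" by (auto simp: atLeast0LessThan)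
        also have "\<sigma> ` {..<?r} = {..<?r}" using permutes_image[OF sp] .
        finally show ?thesis using imK by simp
      qed
      ultimately show "L \<in> perms (set K)" by (simp add: perms_def)
    next
      fix L assume L: "L \<in> perms (set K)"
      have lenL: "length L = ?r" using perms_length[OF L] distinct_card[OF dK] by simp
      have dL: "distinct L" and sL: "set L = set K" using L by (auto simp: perms_def)
      define \<sigma> where "\<sigma> = (\<lambda>s. if s < ?r then the_inv_into {..<?r} (nth K) (L!s) else s)"
      have into: "\<And>s. s < ?r \<Longrightarrow> \<sigma> s < ?r"
      proof -
        fix s assume "s < ?r"
        then have "L!s \<in> nth K ` {..<?r}" using imK sL lenL nth_mem by auto
        then show "\<sigma> s < ?r" using the_inv_into_into[OF injK, of "L!s" "{..<?r}"] \<open>s < ?r\<close>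
          by (auto simp: \<sigma>_def)
      qed
      have KL: "\<And>s. s < ?r \<Longrightarrow> K ! \<sigma> s = L ! s"
      proof -
        fix s assume "s < ?r"
        then have "L!s \<in> nth K ` {..<?r}" using imK sL lenL nth_mem by auto
        then show "K ! \<sigma> s = L ! s" using f_the_inv_into_f[OF injK] \<open>s < ?r\<close>
          by (auto simp: \<sigma>_def)
      qed
      have inj\<sigma>: "inj_on \<sigma> {..<?r}"
      proof (rule inj_onI)
        fix x y assume "x \<in> {..<?r}" "y \<in> {..<?r}" "\<sigma> x = \<sigma> y"
        then have "L!x = L!y" using KL by (metis lessThan_iff)
        then show "x = y" using dL lenL \<open>x \<in> {..<?r}\<close> \<open>y \<in> {..<?r}\<close> by (simp add: nth_eq_iff_index_eq)
      qed
      have "\<sigma> ` {..<?r} = {..<?r}"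
        by (rule endo_inj_surj) (use into inj\<sigma> in auto)
      then have "bij_betw \<sigma> {..<?r} {..<?r}" by (simp add: bij_betw_def inj\<sigma>)
      then have "\<sigma> permutes {..<?r}"
        by (rule bij_imp_permutes) (simp add: \<sigma>_def)
      moreover have "?f \<sigma> = L" using KL lenL by (intro nth_equalityI) auto
      ultimately show "L \<in> ?f ` {\<sigma>. \<sigma> permutes {..<length K}}" by (intro image_eqI[of _ _ \<sigma>]) auto
    qed
  qed
qed

lemma cdet_list:
  assumes s: "sorted_wrt (<) K" and len: "length L' = length K"
  shows "cdet scal q K L' X = (\<Sum>L\<in>perms (set K). scal (eps q L) * prod_list (map2 X L L'))"
proof -
  let ?f = "\<lambda>\<sigma>. map (\<lambda>s. K ! \<sigma> s) [0..<length K]"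
  have "(\<Sum>L\<in>perms (set K). scal (eps q L) * prod_list (map2 X L L'))
      = (\<Sum>\<sigma>\<in>{\<sigma>. \<sigma> permutes {..<length K}}. scal (eps q (?f \<sigma>)) * prod_list (map2 X (?f \<sigma>) L'))"
    using sum.reindex_bij_betw[OF bij_perm_list[OF s], symmetric] by blast
  also have "\<dots> = cdet scal q K L' X"
    unfolding cdet_def
  proof (rule sum.cong[OF refl])
    fix \<sigma> assume "\<sigma> \<in> {\<sigma>. \<sigma> permutes {..<length K}}"
    then have sp: "\<sigma> permutes {..<length K}" by simp
    have "map2 X (?f \<sigma>) L' = map (\<lambda>s. X (K ! \<sigma> s) (L' ! s)) [0..<length K]"
      using len by (subst map2_nth) auto
    then show "scal (eps q (?f \<sigma>)) * prod_list (map2 X (?f \<sigma>) L')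
      = scal (eps_perm q K \<sigma>) * prod_list (map (\<lambda>s. X (K ! \<sigma> s) (L' ! s)) [0..<length K])"
      using eps_perm_list[OF s sp] by simp
  qed
  finally show ?thesis by simp
qed



locale alg_ctx =
  fixes scal :: "complex \<Rightarrow> 'a::ring_1"
  assumes alg: "complex_algebra_map scal"
begin

lemma scal_one[simp]: "scal 1 = 1" using alg unfolding complex_algebra_map_def by blast
lemma scal_add: "scal (a + b) = scal a + scal b" using alg unfolding complex_algebra_map_def by blast
lemma scal_mult: "scal (a * b) = scal a * scal b" using alg unfolding complex_algebra_map_def by blast
lemma scal_central: "scal c * x = x * scal c" using alg unfolding complex_algebra_map_def by blast
lemma scal_zero[simp]: "scal 0 = 0"
  using scal_add[of 0 0] by simp
lemma scal_uminus: "scal (- a) = - scal a"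
proof -
  have "scal a + scal (- a) = 0" using scal_add[of a "-a"] by simp
  then show ?thesis by (metis neg_eq_iff_add_eq_0)
qed
lemma scal_central2: "scal c * (x * y) = x * (scal c * y)"
  by (metis mult.assoc scal_central)
lemma half_trick: "x + x = y + y \<Longrightarrow> x = (y::'a)"
proof -
  assume h: "x + x = y + y"
  have "\<And>z::'a. scal (1/2) * (z + z) = z"
  proof -
    fix z :: 'a
    have "scal (1/2) * (z + z) = (scal (1/2) + scal (1/2)) * z" by (simp add: algebra_simps)
    also have "\<dots> = scal (1/2 + 1/2) * z" by (simp only: scal_add)
    finally show "scal (1/2) * (z + z) = z" by simp
  qed
  then show ?thesis by (metis h)
qed

end

locale man_ctx = alg_ctx scal for scal :: "complex \<Rightarrow> 'a::ring_1" +
  fixes n :: nat and q p :: "nat \<Rightarrow> nat \<Rightarrow> complex" and M :: "nat \<Rightarrow> nat \<Rightarrow> 'a"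
  assumes pq: "param_matrix n q" and pp: "param_matrix n p"
    and man: "manin scal n q p M"
begin

lemma core2:
  assumes ij: "i < j" and r: "i \<in> {1..n}" "j \<in> {1..n}" "a \<in> {1..n}" "b \<in> {1..n}"
  shows "M i a * M j b - scal (q j i) * M j a * M i b
       = scal (- p a b) * (M i b * M j a - scal (q j i) * M j b * M i a)"
proof (cases a b rule: linorder_cases)
  case less
  have "M i a * M j b - scal (q j i * p a b) * M j b * M i a
          + scal (p a b) * M i b * M j a - scal (q j i) * M j a * M i b = 0"
    using man r ij less unfolding manin_def by blast
  then show ?thesis
    by (simp add: scal_mult scal_uminus algebra_simps)
next
  case equal
  have "M i a * M j a = scal (q j i) * M j a * M i a"
    using man r ij unfolding manin_def by blast
  moreover have "p a a = 1" using pp r by (simp add: param_matrix_def)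
  ultimately show ?thesis using equal by (simp add: scal_uminus)
next
  case greater
  define X1 where "X1 = M i b * M j a"
  define Y1 where "Y1 = M j a * M i b"
  define X2 where "X2 = M i a * M j b"
  define Y2 where "Y2 = M j b * M i a"
  define P where "P = p a b"
  define P' where "P' = p b a"
  define Q where "Q = q j i"
  have "M i b * M j a - scal (q j i * p b a) * M j a * M i b
          + scal (p b a) * M i a * M j b - scal (q j i) * M j b * M i a = 0"
    using man r ij greater unfolding manin_def by blast
  then have e: "X1 - scal (Q * P') * Y1 + scal P' * X2 - scal Q * Y2 = 0"
    by (simp add: X1_def Y1_def X2_def Y2_def P'_def Q_def mult.assoc)
  have PP: "P * P' = 1" using pp r by (simp add: param_matrix_def P_def P'_def)
  have f1: "scal P * (scal (Q * P') * Y1) = scal Q * Y1"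
  proof -
    have "scal P * (scal (Q * P') * Y1) = scal (P * (Q * P')) * Y1" by (simp add: scal_mult mult.assoc)
    also have "P * (Q * P') = Q" using PP by (metis mult.left_commute mult_1_right)
    finally show ?thesis .
  qed
  have f2: "scal P * (scal P' * X2) = X2"
  proof -
    have "scal P * (scal P' * X2) = scal (P * P') * X2" by (simp add: scal_mult mult.assoc)
    then show ?thesis using PP by simp
  qed
  have f3: "scal P * (scal Q * Y2) = scal P * scal Q * Y2" by (simp add: mult.assoc)
  have "0 = scal P * (X1 - scal (Q * P') * Y1 + scal P' * X2 - scal Q * Y2)" using e by simp
  also have "\<dots> = scal P * X1 - scal P * (scal (Q * P') * Y1) + scal P * (scal P' * X2) - scal P * (scal Q * Y2)"
    by (simp add: algebra_simps)
  also have "\<dots> = scal P * X1 - scal Q * Y1 + X2 - scal P * scal Q * Y2"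
    using f1 f2 f3 by simp
  finally have g: "X2 - scal Q * Y1 = - scal P * X1 + scal P * scal Q * Y2"
    by (simp add: algebra_simps)
  show ?thesis using g
    by (simp add: X1_def Y1_def X2_def Y2_def P_def Q_def scal_uminus algebra_simps)
qed

end


definition swp :: "nat \<Rightarrow> nat list \<Rightarrow> nat list" where
  "swp t L = take t L @ L!(Suc t) # L!t # drop (Suc (Suc t)) L"

lemma decomp: "Suc t < length L \<Longrightarrow> L = take t L @ L!t # L!(Suc t) # drop (Suc (Suc t)) L"
proof -
  assume h: "Suc t < length L"
  have "drop t L = L!t # drop (Suc t) L" using h by (simp add: Cons_nth_drop_Suc)
  moreover have "drop (Suc t) L = L!(Suc t) # drop (Suc (Suc t)) L" using h by (simp add: Cons_nth_drop_Suc)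
  ultimately show ?thesis by (metis append_take_drop_id)
qed

lemma swp_app: "length U = t \<Longrightarrow> swp t (U @ i # j # V) = U @ j # i # V"
  by (simp add: swp_def nth_append)

lemma swp_len: "Suc t < length L \<Longrightarrow> length (swp t L) = length L"
  by (simp add: swp_def)

lemma swp_swp: "Suc t < length L \<Longrightarrow> swp t (swp t L) = L"
proof -
  assume h: "Suc t < length L"
  obtain U i j V where L: "L = U @ i # j # V" "length U = t"
    using decomp[OF h] h by (metis length_take min_absorb2 Suc_lessD less_imp_le)
  show ?thesis using L by (simp add: swp_app)
qed

lemma swp_perms: "Suc t < length L \<Longrightarrow> L \<in> perms A \<Longrightarrow> swp t L \<in> perms A"
proof -
  assume h: "Suc t < length L" "L \<in> perms A"
  obtain U i j V where L: "L = U @ i # j # V" "length U = t"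
    using decomp[OF h(1)] h by (metis length_take min_absorb2 Suc_lessD less_imp_le)
  show ?thesis using L h(2) by (auto simp: swp_app perms_def)
qed

context man_ctx
begin

lemma scal_move: "scal (c * e) * (X * Z) = scal e * (X * (scal c * Z))"
proof -
  have "scal (c * e) = scal e * scal c"
    using scal_mult[of e c] by (simp add: mult.commute)
  then have "scal (c * e) * (X * Z) = (scal e * scal c) * (X * Z)" by simp
  also have "\<dots> = scal e * (scal c * (X * Z))" by (simp only: mult.assoc)
  also have "\<dots> = scal e * (X * (scal c * Z))" by (simp only: scal_central2[of c X Z])
  finally show ?thesis .
qed

lemma pair_term:
  fixes K :: "nat list"
  assumes sK: "set K \<subseteq> {1..n}"
    and lP: "length P = t" and ab: "a \<in> {1..n}" "b \<in> {1..n}"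
    and LK: "L \<in> perms (set K)" and lenL: "Suc t < length L" and lt: "L!t < L!(Suc t)"
  shows "scal (eps q L) * prod_list (map2 M L (P@a#b#S)) + scal (eps q (swp t L)) * prod_list (map2 M (swp t L) (P@a#b#S))
       = scal (- p a b) * (scal (eps q L) * prod_list (map2 M L (P@b#a#S)) + scal (eps q (swp t L)) * prod_list (map2 M (swp t L) (P@b#a#S)))"
proof -
  obtain U i j V where L: "L = U @ i # j # V" and lU: "length U = t"
    using decomp[OF lenL] lenL by (metis length_take min_absorb2 Suc_lessD less_imp_le)
  have ij: "i < j" using lt L lU by (simp add: nth_append)
  have dL: "distinct (U @ i # j # V)" and sL: "set (U @ i # j # V) = set K" using LK L by (auto simp: perms_def)
  have ir: "i \<in> {1..n}" "j \<in> {1..n}" using sL sK by auto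
  have sw: "swp t L = U @ j # i # V" using L lU swp_app by simp
  have es: "eps q (U @ j # i # V) = (- q j i) * eps q (U @ i # j # V)" by (rule eps_swap[OF dL ij])
  define e where "e = eps q (U @ i # j # V)"
  define X where "X = prod_list (map2 M U P)"
  define Y where "Y = prod_list (map2 M V S)"
  have p1: "\<And>x y z w. prod_list (map2 M (U @ x # y # V) (P @ z # w # S)) = X * (M x z * (M y w * Y))"
    using lU lP by (simp add: X_def Y_def)
  have gen: "\<And>z w. scal e * (X * (M i z * (M j w * Y))) + scal ((- q j i) * e) * (X * (M j z * (M i w * Y)))
      = scal e * (X * ((M i z * M j w - scal (q j i) * M j z * M i w) * Y))"
  proof -
    fix z w
    have "scal ((- q j i) * e) * (X * (M j z * (M i w * Y))) = scal e * (X * (scal (- q j i) * (M j z * (M i w * Y))))"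
      by (rule scal_move)
    moreover have "(M i z * M j w - scal (q j i) * M j z * M i w) * Y = M i z * (M j w * Y) + scal (- q j i) * (M j z * (M i w * Y))"
      by (simp only: scal_uminus mult.assoc distrib_right diff_conv_add_uminus mult_minus_left)
    ultimately show "scal e * (X * (M i z * (M j w * Y))) + scal ((- q j i) * e) * (X * (M j z * (M i w * Y)))
      = scal e * (X * ((M i z * M j w - scal (q j i) * M j z * M i w) * Y))"
      by (simp only: distrib_left)
  qed
  have c: "M i a * M j b - scal (q j i) * M j a * M i b = scal (- p a b) * (M i b * M j a - scal (q j i) * M j b * M i a)"
    by (rule core2[OF ij ir ab])
  have "scal (eps q L) * prod_list (map2 M L (P@a#b#S)) + scal (eps q (swp t L)) * prod_list (map2 M (swp t L) (P@a#b#S))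
      = scal e * (X * ((M i a * M j b - scal (q j i) * M j a * M i b) * Y))"
    using gen[of a b] L sw es p1 by (simp add: e_def)
  also have "\<dots> = scal e * (X * (scal (- p a b) * (M i b * M j a - scal (q j i) * M j b * M i a) * Y))"
    using c by simp
  also have "\<dots> = scal (- p a b) * (scal e * (X * ((M i b * M j a - scal (q j i) * M j b * M i a) * Y)))"
  proof -
    have "scal e * (X * (scal (- p a b) * (M i b * M j a - scal (q j i) * M j b * M i a) * Y))
        = scal e * (scal (- p a b) * (X * ((M i b * M j a - scal (q j i) * M j b * M i a) * Y)))"
      by (simp only: mult.assoc scal_central2[of "- p a b" X, symmetric])
    also have "\<dots> = scal (- p a b) * (scal e * (X * ((M i b * M j a - scal (q j i) * M j b * M i a) * Y)))"
      by (metis mult.assoc scal_central)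
    finally show ?thesis .
  qed
  also have "scal e * (X * ((M i b * M j a - scal (q j i) * M j b * M i a) * Y))
      = scal (eps q L) * prod_list (map2 M L (P@b#a#S)) + scal (eps q (swp t L)) * prod_list (map2 M (swp t L) (P@b#a#S))"
    using gen[of b a] L sw es p1 by (simp add: e_def)
  finally show ?thesis .
qed

lemma swp_nth: "Suc t < length L \<Longrightarrow> (swp t L) ! t = L ! Suc t \<and> (swp t L) ! Suc t = L ! t"
  by (simp add: swp_def nth_append min_def)

lemma cdet_swap:
  fixes K :: "nat list"
  assumes sK: "sorted_wrt (<) K" "set K \<subseteq> {1..n}"
    and len: "length (P@a#b#S) = length K" and ab: "a \<in> {1..n}" "b \<in> {1..n}"
  shows "cdet scal q K (P@a#b#S) M = scal (- p a b) * cdet scal q K (P@b#a#S) M"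
proof -
  let ?t = "length P"
  let ?Ps = "perms (set K)"
  define g1 where "g1 = (\<lambda>L. scal (eps q L) * prod_list (map2 M L (P@a#b#S)))"
  define g2 where "g2 = (\<lambda>L. scal (eps q L) * prod_list (map2 M L (P@b#a#S)))"
  have dK: "distinct K" using sK(1) strict_sorted_iff by blast
  have lenP: "\<And>L. L \<in> ?Ps \<Longrightarrow> length L = length K"
    using perms_length distinct_card[OF dK] by simp
  have st: "\<And>L. L \<in> ?Ps \<Longrightarrow> Suc ?t < length L" using lenP len by simp
  have fin: "finite ?Ps" by (simp add: finite_perms)
  have e1: "cdet scal q K (P@a#b#S) M = sum g1 ?Ps"
    using cdet_list[OF sK(1), where L'="P@a#b#S" and scal=scal and q=q and X=M] len by (simp add: g1_def)
  have e2: "cdet scal q K (P@b#a#S) M = sum g2 ?Ps"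
    using cdet_list[OF sK(1), where L'="P@b#a#S" and scal=scal and q=q and X=M] len by (simp add: g2_def)
  have bij: "bij_betw (swp ?t) ?Ps ?Ps"
    by (rule bij_betw_byWitness[where f'="swp ?t"]) (auto simp: swp_swp st swp_perms)
  have r1: "sum (\<lambda>L. g1 (swp ?t L)) ?Ps = sum g1 ?Ps" by (rule sum.reindex_bij_betw[OF bij])
  have r2: "sum (\<lambda>L. g2 (swp ?t L)) ?Ps = sum g2 ?Ps" by (rule sum.reindex_bij_betw[OF bij])
  have per: "\<And>L. L \<in> ?Ps \<Longrightarrow> g1 L + g1 (swp ?t L) = scal (- p a b) * (g2 L + g2 (swp ?t L))"
  proof -
    fix L assume LP: "L \<in> ?Ps"
    have dL: "distinct L" using LP by (simp add: perms_def)
    have ne: "L ! ?t \<noteq> L ! Suc ?t" using dL st[OF LP] by (simp add: nth_eq_iff_index_eq)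
    show "g1 L + g1 (swp ?t L) = scal (- p a b) * (g2 L + g2 (swp ?t L))"
    proof (cases "L ! ?t < L ! Suc ?t")
      case True
      show ?thesis unfolding g1_def g2_def
        by (rule pair_term[OF sK(2) refl ab LP st[OF LP] True])
    next
      case False
      then have lt: "L ! Suc ?t < L ! ?t" using ne by simp
      let ?L' = "swp ?t L"
      have L'P: "?L' \<in> ?Ps" using swp_perms st LP by blast
      have lt': "?L' ! ?t < ?L' ! Suc ?t" using swp_nth[OF st[OF LP]] lt by simp
      have "g1 ?L' + g1 (swp ?t ?L') = scal (- p a b) * (g2 ?L' + g2 (swp ?t ?L'))"
        unfolding g1_def g2_def by (rule pair_term[OF sK(2) refl ab L'P st[OF L'P] lt'])
      then show ?thesis using swp_swp[OF st[OF LP]] by (simp add: add.commute)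
    qed
  qed
  have "sum g1 ?Ps + sum g1 ?Ps = sum (\<lambda>L. g1 L + g1 (swp ?t L)) ?Ps"
    using r1 by (simp add: sum.distrib)
  also have "\<dots> = sum (\<lambda>L. scal (- p a b) * (g2 L + g2 (swp ?t L))) ?Ps"
    using per by (rule sum.cong[OF refl])
  also have "\<dots> = scal (- p a b) * sum g2 ?Ps + scal (- p a b) * sum g2 ?Ps"
    using r2 by (simp add: sum_distrib_left[symmetric] sum.distrib distrib_left)
  finally have "sum g1 ?Ps = scal (- p a b) * sum g2 ?Ps" by (rule half_trick)
  then show ?thesis using e1 e2 by simp
qed

lemma cdet_eq0:
  fixes K :: "nat list"
  assumes sK: "sorted_wrt (<) K" "set K \<subseteq> {1..n}"
    and len: "length (P@a#a#S) = length K" and a: "a \<in> {1..n}"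
  shows "cdet scal q K (P@a#a#S) M = 0"
proof -
  have "p a a = 1" using pp a by (simp add: param_matrix_def)
  then have "cdet scal q K (P@a#a#S) M = - cdet scal q K (P@a#a#S) M"
    using cdet_swap[OF sK len a a] by (simp add: scal_uminus)
  then have "cdet scal q K (P@a#a#S) M + cdet scal q K (P@a#a#S) M = 0 + 0"
    by (metis add.right_inverse add_0)
  then show ?thesis by (rule half_trick)
qed

end


context man_ctx
begin

lemma B1:
  fixes K :: "nat list"
  assumes sK: "sorted_wrt (<) K" "set K \<subseteq> {1..n}"
  shows "sorted_wrt (<) S \<Longrightarrow> x \<notin> set S \<Longrightarrow> length (P@x#S) = length K \<Longrightarrow> set (P@x#S) \<subseteq> {1..n} \<Longrightarrow>
    cdet scal q K (P@x#S) M = scal (\<Prod>y\<in>{y\<in>set S. y<x}. - p x y) * cdet scal q K (P @ insort x S) M"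
proof (induction S arbitrary: P)
  case Nil then show ?case by simp
next
  case (Cons y S)
  show ?case
  proof (cases "x < y")
    case True
    then have e: "{z\<in>set (y#S). z<x} = {}" using Cons.prems(1) by auto
    show ?thesis unfolding e using True by simp
  next
    case False
    then have yx: "y < x" using Cons.prems(2) by simp
    have sw: "cdet scal q K (P@x#y#S) M = scal (- p x y) * cdet scal q K (P@y#x#S) M"
      by (rule cdet_swap[OF sK]) (use Cons.prems in auto)
    have ih: "cdet scal q K ((P@[y])@x#S) M = scal (\<Prod>z\<in>{z\<in>set S. z<x}. - p x z) * cdet scal q K ((P@[y]) @ insort x S) M"
      by (rule Cons.IH) (use Cons.prems in auto)
    have ins: "insort x (y#S) = y # insort x S" using yx by simp
    have set: "{z\<in>set (y#S). z<x} = insert y {z\<in>set S. z<x}" using yx by auto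
    have yS: "y \<notin> set S" using Cons.prems(1) by auto
    have pr: "(\<Prod>z\<in>insert y {z\<in>set S. z<x}. - p x z) = - p x y * (\<Prod>z\<in>{z\<in>set S. z<x}. - p x z)"
      using yS by (subst prod.insert) auto
    have sm: "scal (- p x y * (\<Prod>z\<in>{z\<in>set S. z<x}. - p x z)) = scal (- p x y) * scal (\<Prod>z\<in>{z\<in>set S. z<x}. - p x z)"
      by (rule scal_mult)
    show ?thesis unfolding ins set pr using sw ih sm by (simp add: mult.assoc)
  qed
qed

lemma B1':
  fixes K :: "nat list"
  assumes sK: "sorted_wrt (<) K" "set K \<subseteq> {1..n}"
  shows "sorted_wrt (<) S \<Longrightarrow> x \<in> set S \<Longrightarrow> length (P@x#S) = length K \<Longrightarrow> set (P@x#S) \<subseteq> {1..n} \<Longrightarrow>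
    cdet scal q K (P@x#S) M = 0"
proof (induction S arbitrary: P)
  case Nil then show ?case by simp
next
  case (Cons y S)
  show ?case
  proof (cases y x rule: linorder_cases)
    case equal
    show ?thesis using equal cdet_eq0[OF sK, of P x S] Cons.prems by auto
  next
    case less
    have xS: "x \<in> set S" using less Cons.prems(2) by auto
    have sw: "cdet scal q K (P@x#y#S) M = scal (- p x y) * cdet scal q K (P@y#x#S) M"
      by (rule cdet_swap[OF sK]) (use Cons.prems in auto)
    have ih: "cdet scal q K ((P@[y])@x#S) M = 0"
      by (rule Cons.IH) (use Cons.prems xS in auto)
    show ?thesis using sw ih by simp
  next
    case greater
    then show ?thesis using Cons.prems(1,2) by auto
  qed
qed

lemma B2:
  fixes K :: "nat list"
  assumes sK: "sorted_wrt (<) K" "set K \<subseteq> {1..n}"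
  shows "length (P@L) = length K \<Longrightarrow> set (P@L) \<subseteq> {1..n} \<Longrightarrow>
    cdet scal q K (P@L) M = (if distinct L then scal (eps p L) * cdet scal q K (P @ sort L) M else 0)"
proof (induction L arbitrary: P)
  case Nil then show ?case by simp
next
  case (Cons x L)
  have ih: "cdet scal q K ((P@[x])@L) M = (if distinct L then scal (eps p L) * cdet scal q K ((P@[x]) @ sort L) M else 0)"
    by (rule Cons.IH) (use Cons.prems in auto)
  show ?case
  proof (cases "distinct L")
    case False then show ?thesis using ih by simp
  next
    case True
    have ss: "sorted_wrt (<) (sort L)" using True by (simp add: strict_sorted_iff)
    show ?thesis
    proof (cases "x \<in> set L")
      case True
      have "cdet scal q K (P @ x # sort L) M = 0"
        by (rule B1'[OF sK ss]) (use Cons.prems True in auto)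
      then show ?thesis using ih \<open>distinct L\<close> True by simp
    next
      case False
      have b: "cdet scal q K (P @ x # sort L) M
          = scal (\<Prod>y\<in>{y\<in>set (sort L). y<x}. - p x y) * cdet scal q K (P @ insort x (sort L)) M"
        by (rule B1[OF sK ss]) (use Cons.prems False in auto)
      have d: "distinct (x#L)" using False \<open>distinct L\<close> by simp
      have e: "eps p (x#L) = (\<Prod>y\<in>{y\<in>set L. y<x}. - p x y) * eps p L" by (rule eps_Cons[OF d])
      have "scal (eps p L) * (scal (\<Prod>y\<in>{y\<in>set L. y<x}. - p x y) * Z) = scal (eps p (x#L)) * Z" for Z
        using e by (simp add: scal_mult mult.assoc[symmetric] mult.commute)
      then show ?thesis using ih b d \<open>distinct L\<close> by simp
    qed
  qed
qed

end


lemma lists_Suc: "{l. length l = Suc k \<and> set l \<subseteq> A} = (\<lambda>(x,l). x#l) ` (A \<times> {l. length l = k \<and> set l \<subseteq> A})"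
  by (auto simp: length_Suc_conv image_iff)

context alg_ctx
begin

lemma collapse:
  fixes M N :: "nat \<Rightarrow> nat \<Rightarrow> 'a"
  assumes inv: "\<And>i j. i \<in> {1..n} \<Longrightarrow> j \<in> {1..n} \<Longrightarrow> (\<Sum>k=1..n. M i k * N k j) = (if i = j then 1 else 0)"
  shows "length R = length J \<Longrightarrow> set R \<subseteq> {1..n} \<Longrightarrow> set J \<subseteq> {1..n} \<Longrightarrow>
    (\<Sum>l\<in>{l. length l = length R \<and> set l \<subseteq> {1..n}}. prod_list (rev (map2 M R l)) * prod_list (map2 N l J))
      = (if R = J then 1 else 0)"
proof (induction R arbitrary: J)
  case Nil
  have "{l::nat list. length l = 0 \<and> set l \<subseteq> {1..n}} = {[]}" by auto
  then show ?case using Nil by simp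
next
  case (Cons r R)
  obtain j J' where J: "J = j # J'" using Cons.prems(1) by (cases J) auto
  let ?LS = "{l. length l = length R \<and> set l \<subseteq> {1..n}}"
  define A where "A = (\<lambda>l. prod_list (rev (map2 M R l)))"
  define B where "B = (\<lambda>l. prod_list (map2 N l J'))"
  have fin: "finite ?LS" using finite_lists_length_eq[of "{1..n}" "length R"] by (simp add: conj_commute)
  have r: "r \<in> {1..n}" and j: "j \<in> {1..n}" using Cons.prems J by auto
  have "(\<Sum>l\<in>{l. length l = length (r#R) \<and> set l \<subseteq> {1..n}}. prod_list (rev (map2 M (r#R) l)) * prod_list (map2 N l J))
      = (\<Sum>xl\<in>{1..n} \<times> ?LS. prod_list (rev (map2 M (r#R) (fst xl # snd xl))) * prod_list (map2 N (fst xl # snd xl) J))"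
    by (simp only: length_Cons lists_Suc, subst sum.reindex) (auto simp: inj_on_def case_prod_unfold)
  also have "\<dots> = (\<Sum>(x,l)\<in>{1..n} \<times> ?LS. A l * M r x * (N x j * B l))"
    by (rule sum.cong[OF refl]) (auto simp: A_def B_def J)
  also have "\<dots> = (\<Sum>x\<in>{1..n}. \<Sum>l\<in>?LS. A l * M r x * (N x j * B l))"
    by (rule sum.cartesian_product[symmetric])
  also have "\<dots> = (\<Sum>l\<in>?LS. \<Sum>x\<in>{1..n}. A l * (M r x * N x j) * B l)"
    by (subst sum.swap) (simp add: mult.assoc)
  also have "\<dots> = (\<Sum>l\<in>?LS. A l * (\<Sum>x\<in>{1..n}. M r x * N x j) * B l)"
    by (simp add: sum_distrib_left sum_distrib_right)
  also have "\<dots> = (\<Sum>l\<in>?LS. A l * (if r = j then 1 else 0) * B l)"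
    using inv[OF r j] by simp
  also have "\<dots> = (if r # R = J then 1 else 0)"
  proof (cases "r = j")
    case True
    have "(\<Sum>l\<in>?LS. A l * B l) = (if R = J' then 1 else 0)"
      unfolding A_def B_def by (rule Cons.IH) (use Cons.prems J in auto)
    then show ?thesis using True J by simp
  next
    case False then show ?thesis using J by simp
  qed
  finally show ?case .
qed

end


lemma compl_facts:
  assumes "distinct I" "set I \<subseteq> {1..n}"
  shows "sorted_wrt (<) (compl_idx n I)" "set (compl_idx n I) = {1..n} - set I"
    "distinct (compl_idx n I)" "length (compl_idx n I) = n - length I"
proof -
  show s: "sorted_wrt (<) (compl_idx n I)" unfolding compl_idx_def
    by (rule sorted_wrt_filter) (rule sorted_wrt_upt)
  show st: "set (compl_idx n I) = {1..n} - set I" unfolding compl_idx_def by auto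
  show d: "distinct (compl_idx n I)" using s strict_sorted_iff by blast
  have "length (compl_idx n I) = card ({1..n} - set I)" using distinct_card[OF d] st by simp
  also have "\<dots> = n - card (set I)" using assms(2) by (simp add: card_Diff_subset)
  also have "\<dots> = n - length I" using distinct_card[OF assms(1)] by simp
  finally show "length (compl_idx n I) = n - length I" .
qed

lemma length_le: fixes I :: "nat list" shows "distinct I \<Longrightarrow> set I \<subseteq> {1..n} \<Longrightarrow> length I \<le> n"
  by (metis card_atLeastAtMost card_mono distinct_card finite_atLeastAtMost diff_Suc_1)

lemma full_set:
  fixes L :: "nat list" and n :: nat
  assumes "distinct L" "set L \<subseteq> {1..n}" "length L = n"
  shows "set L = {1..n}"
proof (rule card_subset_eq)
  show "card (set L) = card {1..n}" using distinct_card[OF assms(1)] assms(3) by simp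
qed (use assms in auto)

lemma sort_full:
  fixes L :: "nat list" and n :: nat
  assumes "distinct L" "set L \<subseteq> {1..n}" "length L = n"
  shows "sort L = [1..<n+1]"
proof (rule sorted_distinct_set_unique)
  show "set (sort L) = set [1..<n+1]" using full_set[OF assms]
    by (metis Suc_eq_plus1 atLeastLessThanSuc_atLeastAtMost set_sort set_upt)
qed (use assms in \<open>simp_all del: upt_Suc\<close>)

lemma perms_I_iff:
  assumes C: "set C = {1..n} - set I" and I: "distinct I" "set I \<subseteq> {1..n}" and dC: "distinct C"
    and l: "length l = length I" "set l \<subseteq> {1..n}"
  shows "distinct (C @ rev l) \<longleftrightarrow> l \<in> perms (set I)"
proof
  assume d: "distinct (C @ rev l)"
  then have dl: "distinct l" and sl: "set l \<subseteq> set I" using C l by auto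
  have "card (set l) = card (set I)" using distinct_card[OF dl] distinct_card[OF I(1)] l by simp
  then have "set l = set I" using sl by (intro card_subset_eq) auto
  then show "l \<in> perms (set I)" using dl by (simp add: perms_def)
next
  assume "l \<in> perms (set I)"
  then show "distinct (C @ rev l)" using C dC by (auto simp: perms_def)
qed

lemma K0_facts: "sorted_wrt (<) [1..<n+1]" "set [1..<n+1] = {1..n}" "length [1..<n+1] = n"
proof -
  show "sorted_wrt (<) [1..<n+1]" by (rule sorted_wrt_upt)
  show "set [1..<n+1] = {1..n}" by (metis Suc_eq_plus1 atLeastLessThanSuc_atLeastAtMost set_upt)
  show "length [1..<n+1] = n" by simp
qed

lemma eps_rev_perm:
  assumes pp: "param_matrix n p" and I: "sorted_wrt (<) I" "set I \<subseteq> {1..n}"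
    and dC: "distinct C" and disj: "set C \<inter> set I = {}"
    and l: "l \<in> perms (set I)"
  shows "eps p (C @ rev l) = eps p (C @ rev I) * eps (pinv p) l"
proof -
  have dI: "distinct I" using I(1) strict_sorted_iff by blast
  have dl: "distinct l" and sl: "set l = set I" using l by (auto simp: perms_def)
  have d1: "distinct (C @ rev l)" using dC dl disj sl by auto
  have d2: "distinct (C @ rev I)" using dC dI disj by auto
  have a1: "eps p (C @ rev l) = eps p C * eps p (rev l) * cross p (set C) (set I)"
    using eps_append[OF d1] sl by simp
  have a2: "eps p (C @ rev I) = eps p C * eps p (rev I) * cross p (set C) (set I)"
    using eps_append[OF d2] by simp
  have r1: "eps p l * eps p (rev l) = cross p (set I) (set I)" using eps_rev[OF dl] sl by simp
  have i1: "eps (pinv p) l * eps p l = 1" using eps_pinv[OF pp dl] sl I(2) by simp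
  have rl: "eps p (rev l) = eps (pinv p) l * cross p (set I) (set I)"
  proof -
    have "eps p (rev l) = (eps (pinv p) l * eps p l) * eps p (rev l)" using i1 by simp
    also have "\<dots> = eps (pinv p) l * cross p (set I) (set I)" using r1 by (simp add: mult.assoc)
    finally show ?thesis .
  qed
  have r2: "eps p I * eps p (rev I) = cross p (set I) (set I)" using eps_rev[OF dI] by simp
  have "eps p I = 1" by (rule eps_sorted[OF I(1)])
  then have rI: "eps p (rev I) = cross p (set I) (set I)" using r2 by simp
  show ?thesis using a1 a2 rl rI by (simp add: algebra_simps)
qed

context man_ctx
begin

declare upt_Suc[simp del]

lemma partB:
  fixes I J :: "nat list" and N :: "nat \<Rightarrow> nat \<Rightarrow> 'a"
  assumes Iinc: "sorted_wrt (<) I" and Irange: "set I \<subseteq> {1..n}" and Jlen: "length J = length I"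
  shows "(\<Sum>l\<in>{l. length l = length I \<and> set l \<subseteq> {1..n}}. cdet scal q [1..<n+1] (compl_idx n I @ rev l) M * prod_list (map2 N l J))
    = scal (eps p (compl_idx n I @ rev I)) * cdet scal q [1..<n+1] [1..<n+1] M * cdet scal (pinv p) I J N"
proof -
  let ?C = "compl_idx n I"
  let ?K = "[1..<n+1]"
  let ?LS = "{l. length l = length I \<and> set l \<subseteq> {1..n}}"
  let ?P = "perms (set I)"
  define D where "D = cdet scal q ?K ?K M"
  have dI: "distinct I" using Iinc strict_sorted_iff by blast
  note cf = compl_facts[OF dI Irange]
  note kf = K0_facts[of n]
  have kle: "length I \<le> n" by (rule length_le[OF dI Irange])
  have finLS: "finite ?LS" using finite_lists_length_eq[of "{1..n}" "length I"] by (simp add: conj_commute)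
  have PLS: "?P \<subseteq> ?LS"
  proof
    fix l assume "l \<in> ?P"
    then have dl: "distinct l" and sl: "set l = set I" by (auto simp: perms_def)
    then have "length l = length I" by (metis distinct_card dI)
    then show "l \<in> ?LS" using sl Irange by simp
  qed
  have tm: "\<And>l. l \<in> ?LS \<Longrightarrow> cdet scal q ?K (?C @ rev l) M = (if l \<in> ?P then scal (eps p (?C @ rev l)) * D else 0)"
  proof -
    fix l assume l: "l \<in> ?LS"
    have len: "length ([] @ (?C @ rev l)) = length ?K" using l cf(4) kle kf(3) by simp
    have st: "set ([] @ (?C @ rev l)) \<subseteq> {1..n}" using l cf(2) by auto
    have b: "cdet scal q ?K ([] @ (?C @ rev l)) M
      = (if distinct (?C @ rev l) then scal (eps p (?C @ rev l)) * cdet scal q ?K ([] @ sort (?C @ rev l)) M else 0)"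
      by (rule B2[OF kf(1) _ len st]) (simp only: kf(2))
    have iff: "distinct (?C @ rev l) \<longleftrightarrow> l \<in> ?P"
      by (rule perms_I_iff[OF cf(2) dI Irange cf(3)]) (use l in auto)
    show "cdet scal q ?K (?C @ rev l) M = (if l \<in> ?P then scal (eps p (?C @ rev l)) * D else 0)"
    proof (cases "distinct (?C @ rev l)")
      case True
      have "sort (?C @ rev l) = ?K"
        by (rule sort_full) (use True len st kf(3) in auto)
      have "l \<in> ?P" using True iff by blast
      have "cdet scal q ?K (?C @ rev l) M = scal (eps p (?C @ rev l)) * D"
        using b \<open>sort (?C @ rev l) = ?K\<close> unfolding if_P[OF True] by (simp add: D_def)
      then show ?thesis using \<open>l \<in> ?P\<close> by simp
    next
      case False
      then have "l \<notin> ?P" using iff by blast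
      have "cdet scal q ?K (?C @ rev l) M = 0" using b unfolding if_not_P[OF False] by simp
      then show ?thesis using \<open>l \<notin> ?P\<close> by simp
    qed
  qed
  have "(\<Sum>l\<in>?LS. cdet scal q ?K (?C @ rev l) M * prod_list (map2 N l J))
      = (\<Sum>l\<in>?LS. if l \<in> ?P then scal (eps p (?C @ rev l)) * D * prod_list (map2 N l J) else 0)"
  proof (rule sum.cong[OF refl])
    fix l assume l: "l \<in> ?LS"
    show "cdet scal q ?K (?C @ rev l) M * prod_list (map2 N l J)
      = (if l \<in> ?P then scal (eps p (?C @ rev l)) * D * prod_list (map2 N l J) else 0)"
      using tm[OF l] by simp
  qed
  also have "\<dots> = (\<Sum>l\<in>?LS \<inter> ?P. scal (eps p (?C @ rev l)) * D * prod_list (map2 N l J))"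
    by (rule sum.inter_restrict[OF finLS, symmetric])
  also have "?LS \<inter> ?P = ?P" using PLS by blast
  also have "(\<Sum>l\<in>?P. scal (eps p (?C @ rev l)) * D * prod_list (map2 N l J))
      = (\<Sum>l\<in>?P. scal (eps p (?C @ rev I)) * D * (scal (eps (pinv p) l) * prod_list (map2 N l J)))"
  proof (rule sum.cong[OF refl])
    fix l assume l: "l \<in> ?P"
    have "eps p (?C @ rev l) = eps p (?C @ rev I) * eps (pinv p) l"
      by (rule eps_rev_perm[OF pp Iinc Irange cf(3) _ l]) (use cf(2) in auto)
    then have "scal (eps p (?C @ rev l)) = scal (eps p (?C @ rev I)) * scal (eps (pinv p) l)"
      by (simp add: scal_mult)
    then show "scal (eps p (?C @ rev l)) * D * prod_list (map2 N l J)
        = scal (eps p (?C @ rev I)) * D * (scal (eps (pinv p) l) * prod_list (map2 N l J))"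
      by (simp add: mult.assoc scal_central[of "eps (pinv p) l" D])
  qed
  also have "\<dots> = scal (eps p (?C @ rev I)) * D * (\<Sum>l\<in>?P. scal (eps (pinv p) l) * prod_list (map2 N l J))"
    by (simp add: sum_distrib_left)
  also have "(\<Sum>l\<in>?P. scal (eps (pinv p) l) * prod_list (map2 N l J)) = cdet scal (pinv p) I J N"
    using cdet_list[OF Iinc, where L'=J and scal=scal and q="pinv p" and X=N] Jlen by simp
  finally show ?thesis by (simp add: D_def)
qed

lemma partA:
  fixes I J :: "nat list" and N :: "nat \<Rightarrow> nat \<Rightarrow> 'a"
  assumes Iinc: "sorted_wrt (<) I" and Irange: "set I \<subseteq> {1..n}"
    and Jlen: "length J = length I" and Jrange: "set J \<subseteq> {1..n}"
    and inv: "\<And>i j. i \<in> {1..n} \<Longrightarrow> j \<in> {1..n} \<Longrightarrow> (\<Sum>k=1..n. M i k * N k j) = (if i = j then 1 else 0)"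
  shows "(\<Sum>l\<in>{l. length l = length I \<and> set l \<subseteq> {1..n}}. cdet scal q [1..<n+1] (compl_idx n I @ rev l) M * prod_list (map2 N l J))
    = (if distinct J then scal (eps q (compl_idx n J @ rev J)) * cdet scal q (compl_idx n J) (compl_idx n I) M else 0)"
proof -
  let ?C = "compl_idx n I"
  let ?K = "[1..<n+1]"
  let ?LS = "{l. length l = length I \<and> set l \<subseteq> {1..n}}"
  let ?PN = "perms {1..n}"
  define m where "m = n - length I"
  define X where "X = (\<lambda>L. prod_list (map2 M (take m L) ?C))"
  define A where "A = (\<lambda>L l. prod_list (rev (map2 M (rev (drop m L)) l)))"
  define B where "B = (\<lambda>l. prod_list (map2 N l J))"
  have dI: "distinct I" using Iinc strict_sorted_iff by blast
  note cf = compl_facts[OF dI Irange]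
  note kf = K0_facts[of n]
  have kle: "length I \<le> n" by (rule length_le[OF dI Irange])
  have lC: "length ?C = m" using cf(4) m_def by simp
  have finLS: "finite ?LS" using finite_lists_length_eq[of "{1..n}" "length I"] by (simp add: conj_commute)
  have finPN: "finite ?PN" by (simp add: finite_perms)
  have lenPN: "\<And>L. L \<in> ?PN \<Longrightarrow> length L = n" using perms_length by fastforce
  have step1: "\<And>l. l \<in> ?LS \<Longrightarrow> cdet scal q ?K (?C @ rev l) M = (\<Sum>L\<in>?PN. scal (eps q L) * (X L * A L l))"
  proof -
    fix l assume l: "l \<in> ?LS"
    have len: "length (?C @ rev l) = length ?K" using l lC kf(3) kle m_def by simp
    have "cdet scal q ?K (?C @ rev l) M = (\<Sum>L\<in>perms (set ?K). scal (eps q L) * prod_list (map2 M L (?C @ rev l)))"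
      by (rule cdet_list[OF kf(1) len])
    also have "\<dots> = (\<Sum>L\<in>?PN. scal (eps q L) * (X L * A L l))"
      unfolding kf(2)
    proof (rule sum.cong[OF refl])
      fix L assume L: "L \<in> ?PN"
      have lL: "length L = n" by (rule lenPN[OF L])
      have ltk: "length (take m L) = length ?C" using lL lC m_def by simp
      have ldr: "length (rev (drop m L)) = length l" using lL l m_def kle by simp
      have "map2 M (take m L @ drop m L) (?C @ rev l) = map2 M (take m L) ?C @ map2 M (drop m L) (rev l)"
        using zip_append[OF ltk, of "drop m L" "rev l"] by (simp del: append_take_drop_id)
      then have "map2 M L (?C @ rev l) = map2 M (take m L) ?C @ map2 M (drop m L) (rev l)" by simp
      also have "map2 M (drop m L) (rev l) = rev (map2 M (rev (drop m L)) l)"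
        using zip_rev[OF ldr] by (simp add: rev_map)
      finally show "scal (eps q L) * prod_list (map2 M L (?C @ rev l)) = scal (eps q L) * (X L * A L l)"
        by (simp add: X_def A_def)
    qed
    finally show "cdet scal q ?K (?C @ rev l) M = (\<Sum>L\<in>?PN. scal (eps q L) * (X L * A L l))" .
  qed
  have coll: "\<And>L. L \<in> ?PN \<Longrightarrow> (\<Sum>l\<in>?LS. A L l * B l) = (if rev (drop m L) = J then 1 else 0)"
  proof -
    fix L assume L: "L \<in> ?PN"
    have lL: "length L = n" by (rule lenPN[OF L])
    have lr: "length (rev (drop m L)) = length I" using lL m_def kle by simp
    have sr: "set (rev (drop m L)) \<subseteq> {1..n}" using L by (auto simp: perms_def dest: in_set_dropD)
    have "(\<Sum>l\<in>{l. length l = length (rev (drop m L)) \<and> set l \<subseteq> {1..n}}. prod_list (rev (map2 M (rev (drop m L)) l)) * prod_list (map2 N l J))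
      = (if rev (drop m L) = J then 1 else 0)"
      by (rule collapse[OF inv]) (use lr Jlen sr Jrange in auto)
    then show "(\<Sum>l\<in>?LS. A L l * B l) = (if rev (drop m L) = J then 1 else 0)"
      unfolding lr by (simp add: A_def B_def)
  qed
  have "(\<Sum>l\<in>?LS. cdet scal q ?K (?C @ rev l) M * prod_list (map2 N l J))
      = (\<Sum>l\<in>?LS. \<Sum>L\<in>?PN. scal (eps q L) * X L * (A L l * B l))"
  proof (rule sum.cong[OF refl])
    fix l assume l: "l \<in> ?LS"
    show "cdet scal q ?K (?C @ rev l) M * prod_list (map2 N l J) = (\<Sum>L\<in>?PN. scal (eps q L) * X L * (A L l * B l))"
      using step1[OF l] by (simp add: B_def sum_distrib_right mult.assoc)
  qed
  also have "\<dots> = (\<Sum>L\<in>?PN. scal (eps q L) * X L * (\<Sum>l\<in>?LS. A L l * B l))"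
    by (subst sum.swap) (simp add: sum_distrib_left)
  also have "\<dots> = (\<Sum>L\<in>?PN. if rev (drop m L) = J then scal (eps q L) * X L else 0)"
  proof (rule sum.cong[OF refl])
    fix L assume L: "L \<in> ?PN"
    show "scal (eps q L) * X L * (\<Sum>l\<in>?LS. A L l * B l) = (if rev (drop m L) = J then scal (eps q L) * X L else 0)"
      using coll[OF L] by simp
  qed
  also have "\<dots> = (if distinct J then scal (eps q (compl_idx n J @ rev J)) * cdet scal q (compl_idx n J) ?C M else 0)"
  proof (cases "distinct J")
    case False
    have "\<And>L. L \<in> ?PN \<Longrightarrow> rev (drop m L) \<noteq> J"
      using False by (auto simp: perms_def)
    then show ?thesis using False by simp
  next
    case True
    let ?Jc = "compl_idx n J"
    note jf = compl_facts[OF True Jrange]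
    have lJc: "length ?Jc = m" using jf(4) Jlen m_def by simp
    have img: "{L\<in>?PN. rev (drop m L) = J} = (\<lambda>A. A @ rev J) ` perms (set ?Jc)"
    proof (rule set_eqI, rule iffI)
      fix L assume "L \<in> {L\<in>?PN. rev (drop m L) = J}"
      then have L: "L \<in> ?PN" and dr: "drop m L = rev J" by auto
      have dL: "distinct L" and sL: "set L = {1..n}" using L by (auto simp: perms_def)
      have e: "L = take m L @ rev J" using dr by (metis append_take_drop_id)
      have "distinct (take m L @ rev J)" using dL e by simp
      then have "distinct (take m L)" "set (take m L) \<inter> set J = {}" by auto
      moreover have "set (take m L) \<union> set J = {1..n}" using sL e by (metis set_append set_rev)
      ultimately have "take m L \<in> perms (set ?Jc)" using jf(2) by (auto simp: perms_def)
      then show "L \<in> (\<lambda>A. A @ rev J) ` perms (set ?Jc)" using e by blast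
    next
      fix L assume "L \<in> (\<lambda>A. A @ rev J) ` perms (set ?Jc)"
      then obtain A where A: "A \<in> perms (set ?Jc)" and L: "L = A @ rev J" by auto
      have dA: "distinct A" and sA: "set A = {1..n} - set J" using A jf(2) by (auto simp: perms_def)
      have lA: "length A = m" using perms_length[OF A] distinct_card[OF jf(3)] lJc by simp
      have "L \<in> ?PN" using dA sA True Jrange L by (auto simp: perms_def)
      moreover have "rev (drop m L) = J" using L lA by simp
      ultimately show "L \<in> {L\<in>?PN. rev (drop m L) = J}" by simp
    qed
    have "(\<Sum>L\<in>?PN. if rev (drop m L) = J then scal (eps q L) * X L else 0)
        = (\<Sum>L\<in>{L\<in>?PN. rev (drop m L) = J}. scal (eps q L) * X L)"
      by (rule sum.inter_filter[OF finPN, symmetric])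
    also have "\<dots> = (\<Sum>A\<in>perms (set ?Jc). scal (eps q (A @ rev J)) * X (A @ rev J))"
      unfolding img by (subst sum.reindex) (auto simp: inj_on_def)
    also have "\<dots> = (\<Sum>A\<in>perms (set ?Jc). scal (eps q (?Jc @ rev J)) * (scal (eps q A) * prod_list (map2 M A ?C)))"
    proof (rule sum.cong[OF refl])
      fix A assume A: "A \<in> perms (set ?Jc)"
      have dA: "distinct A" and sA: "set A = set ?Jc" using A by (auto simp: perms_def)
      have lA: "length A = m" using perms_length[OF A] distinct_card[OF jf(3)] lJc by simp
      have d1: "distinct (A @ rev J)" using dA sA jf(2) True by auto
      have d2: "distinct (?Jc @ rev J)" using jf(2,3) True by auto
      have "eps q (A @ rev J) = eps q A * eps q (rev J) * cross q (set ?Jc) (set J)"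
        using eps_append[OF d1] sA by simp
      moreover have "eps q (?Jc @ rev J) = eps q (rev J) * cross q (set ?Jc) (set J)"
        using eps_append[OF d2] eps_sorted[OF jf(1)] by simp
      ultimately have "eps q (A @ rev J) = eps q (?Jc @ rev J) * eps q A" by simp
      then have "scal (eps q (A @ rev J)) = scal (eps q (?Jc @ rev J)) * scal (eps q A)" by (simp add: scal_mult)
      moreover have "X (A @ rev J) = prod_list (map2 M A ?C)" using lA by (simp add: X_def)
      ultimately show "scal (eps q (A @ rev J)) * X (A @ rev J) = scal (eps q (?Jc @ rev J)) * (scal (eps q A) * prod_list (map2 M A ?C))"
        by (simp add: mult.assoc)
    qed
    also have "\<dots> = scal (eps q (?Jc @ rev J)) * (\<Sum>A\<in>perms (set ?Jc). scal (eps q A) * prod_list (map2 M A ?C))"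
      by (simp add: sum_distrib_left)
    also have "(\<Sum>A\<in>perms (set ?Jc). scal (eps q A) * prod_list (map2 M A ?C)) = cdet scal q ?Jc ?C M"
      using cdet_list[OF jf(1), where L'="?C" and scal=scal and q=q and X=M] lC lJc by simp
    finally show ?thesis using True by simp
  qed
  finally show ?thesis .
qed

end

theorem mainTheorem8:
  fixes scal :: "complex \<Rightarrow> 'a::ring_1"
    and n :: nat
    and q p :: "nat \<Rightarrow> nat \<Rightarrow> complex"
    and M Minv :: "nat \<Rightarrow> nat \<Rightarrow> 'a"
    and I J :: "nat list"
  assumes alg: "complex_algebra_map scal"
    and pq: "param_matrix n q" and pp: "param_matrix n p"
    and man: "manin scal n q p M"
    and inv: "is_inverse n M Minv"
    and Iinc: "sorted_wrt (<) I" and Irange: "set I \<subseteq> {1..n}"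
    and Jlen: "length J = length I" and Jrange: "set J \<subseteq> {1..n}"
  shows "scal (eps p (compl_idx n I @ rev I)) * cdet scal q [1..<n+1] [1..<n+1] M
           * cdet scal (pinv p) I J Minv
         = (if distinct J
            then scal (eps q (compl_idx n J @ rev J)) * cdet scal q (compl_idx n J) (compl_idx n I) M
            else 0)"
proof -
  interpret man_ctx scal n q p M
    by (unfold_locales) (rule alg pq pp man)+
  have inv': "\<And>i j. i \<in> {1..n} \<Longrightarrow> j \<in> {1..n} \<Longrightarrow> (\<Sum>k=1..n. M i k * Minv k j) = (if i = j then 1 else 0)"
    using inv unfolding is_inverse_def mat_mult_def mat_one_def by blast
  show ?thesis
    using partA[OF Iinc Irange Jlen Jrange inv'] partB[OF Iinc Irange Jlen, where N=Minv] by simp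
qed

end
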